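(* Let $K$ be the field of fractions of a complete discrete valuation ring $\mathcal{O}$, and suppose $K$ has characteristic $3$ (the residue field may be infinite). In the coefficient-choosing game of degree $d = 3$ over $K$, whichever player makes the last move has a winning strategy.
   Context: The coefficient-choosing game of degree $d$ over $K$: Nora and Wanda alternately choose coefficients of $f(x) = a_d x^d + \cdots + a_0$; on each move the current player picks a not-yet-chosen coefficient and assigns it a value in $K$, subject to $a_d \neq 0$, $a_0 \neq 0$. After all $d+1$ coefficients are chosen, Wanda wins if $f$ has a root in $K$, and Nora wins otherwise. Who moves first is fixed in advance. *)

theory Defs
  imports "HOL-Computational_Algebra.Polynomial"
begin

text \<open>We encode a discrete valuation on a field K as a
  function v :: K => int whose value at 0 is irrelevant (morally v 0 = infinity).\<close>

definition discrete_valuation :: "('a::field \<Rightarrow> int) \<Rightarrow> bool" where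
  "discrete_valuation v \<longleftrightarrow>
     (\<forall>x y. x \<noteq> 0 \<longrightarrow> y \<noteq> 0 \<longrightarrow> v (x * y) = v x + v y) \<and>
     (\<forall>x y. x \<noteq> 0 \<longrightarrow> y \<noteq> 0 \<longrightarrow> x + y \<noteq> 0 \<longrightarrow> v (x + y) \<ge> min (v x) (v y)) \<and>
     (\<forall>n. \<exists>x. x \<noteq> 0 \<and> v x = n)"

definition val_ring :: "('a::field \<Rightarrow> int) \<Rightarrow> 'a set" where
  "val_ring v = {x. x = 0 \<or> v x \<ge> 0}"

definition val_close :: "('a::field \<Rightarrow> int) \<Rightarrow> int \<Rightarrow> 'a \<Rightarrow> 'a \<Rightarrow> bool" where
  "val_close v N x y \<longleftrightarrow> x = y \<or> v (x - y) \<ge> N"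

definition complete_dvr_fraction_field :: "('a::field \<Rightarrow> int) \<Rightarrow> bool" where
  "complete_dvr_fraction_field v \<longleftrightarrow> discrete_valuation v \<and>
     (\<forall>s :: nat \<Rightarrow> 'a. (\<forall>n. s n \<in> val_ring v) \<longrightarrow>
        (\<forall>N. \<exists>M. \<forall>m\<ge>M. \<forall>n\<ge>M. val_close v N (s m) (s n)) \<longrightarrow>
        (\<exists>l \<in> val_ring v. \<forall>N. \<exists>M. \<forall>n\<ge>M. val_close v N (s n) l))"

text \<open>The coefficient-choosing game of degree d. A position is a partial assignment
  c :: nat => 'a option of the coefficients a_0, ..., a_d.\<close>

datatype player = Nora | Wanda

fun other :: "player \<Rightarrow> player" where
  "other Nora = Wanda" | "other Wanda = Nora"

definition legal_move :: "nat \<Rightarrow> (nat \<Rightarrow> 'a::field option) \<Rightarrow> nat \<Rightarrow> 'a \<Rightarrow> bool" where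
  "legal_move d c i x \<longleftrightarrow> i \<le> d \<and> c i = None \<and> ((i = d \<or> i = 0) \<longrightarrow> x \<noteq> 0)"

definition final_poly :: "nat \<Rightarrow> (nat \<Rightarrow> 'a::field option) \<Rightarrow> 'a poly" where
  "final_poly d c = (\<Sum>i\<le>d. monom (the (c i)) i)"

definition has_root_in_field :: "'a::field poly \<Rightarrow> bool" where
  "has_root_in_field f \<longleftrightarrow> (\<exists>x. poly f x = 0)"

fun win :: "nat \<Rightarrow> ((nat \<Rightarrow> 'a::field option) \<Rightarrow> bool) \<Rightarrow> nat \<Rightarrow> (nat \<Rightarrow> 'a option)
            \<Rightarrow> player \<Rightarrow> player \<Rightarrow> bool" where
  "win d goal 0 c mover me = goal c"
| "win d goal (Suc k) c mover me =
     (if mover = me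
      then (\<exists>i x. legal_move d c i x \<and> win d goal k (c(i := Some x)) (other mover) me)
      else (\<forall>i x. legal_move d c i x \<longrightarrow> win d goal k (c(i := Some x)) (other mover) me))"

definition wanda_goal :: "nat \<Rightarrow> (nat \<Rightarrow> 'a::field option) \<Rightarrow> bool" where
  "wanda_goal d c \<longleftrightarrow> has_root_in_field (final_poly d c)"

definition nora_goal :: "nat \<Rightarrow> (nat \<Rightarrow> 'a::field option) \<Rightarrow> bool" where
  "nora_goal d c \<longleftrightarrow> \<not> has_root_in_field (final_poly d c)"

definition has_winning_strategy :: "'a::field itself \<Rightarrow> nat \<Rightarrow> player \<Rightarrow> player \<Rightarrow> bool" where
  "has_winning_strategy T d first p =
     win d (if p = Wanda then (wanda_goal d :: (nat \<Rightarrow> 'a option) \<Rightarrow> bool) else nora_goal d)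
         (d + 1) (\<lambda>_. None) first p"

definition last_mover :: "nat \<Rightarrow> player \<Rightarrow> player" where
  "last_mover d first = (if even d then first else other first)"

end

theory Submission
  imports Defs
begin

section \<open>Valuation basics\<close>

lemma dv_mult: "discrete_valuation v \<Longrightarrow> x \<noteq> 0 \<Longrightarrow> y \<noteq> 0 \<Longrightarrow> v (x * y) = v x + v y"
  unfolding discrete_valuation_def by blast

lemma dv_add: "discrete_valuation v \<Longrightarrow> x \<noteq> 0 \<Longrightarrow> y \<noteq> 0 \<Longrightarrow> x + y \<noteq> 0 \<Longrightarrow> v (x + y) \<ge> min (v x) (v y)"
  unfolding discrete_valuation_def by blast

lemma dv_ex: "discrete_valuation v \<Longrightarrow> \<exists>x. x \<noteq> 0 \<and> v x = n"
  unfolding discrete_valuation_def by blast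

lemma dv_one: assumes "discrete_valuation v" shows "v (1::'a::field) = 0"
  using dv_mult[OF assms, of "1::'a" 1] by simp

lemma dv_m1: assumes "discrete_valuation v" shows "v (-1::'a::field) = 0"
  using dv_mult[OF assms, of "-1::'a" "-1"] dv_one[OF assms] by simp

lemma dv_uminus: assumes "discrete_valuation v" "(x::'a::field) \<noteq> 0" shows "v (-x) = v x"
proof -
  have "v ((-1) * x) = v (-1) + v x" using dv_mult[OF assms(1), of "-1::'a" x] assms(2) by simp
  then show ?thesis using dv_m1[OF assms(1)] by simp
qed

lemma dv_power: assumes "discrete_valuation v" "(x::'a::field) \<noteq> 0" shows "v (x ^ n) = int n * v x"
proof (induction n)
  case 0 then show ?case using dv_one[OF assms(1)] by simp
next
  case (Suc n)
  have "v (x ^ Suc n) = v (x * x ^ n)" by simp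
  also have "\<dots> = v x + v (x ^ n)" using dv_mult[OF assms(1)] assms(2) by simp
  finally show ?case using Suc by (simp add: algebra_simps)
qed

lemma dv_zero_sum: assumes "discrete_valuation v" "(x::'a::field) \<noteq> 0" "x + y = 0" shows "v y = v x"
proof -
  have "y = - x" using assms(3) by (simp add: add_eq_0_iff2)
  then show ?thesis using dv_uminus[OF assms(1,2)] by simp
qed

lemma dv_dom: assumes "discrete_valuation v" "(x::'a::field) \<noteq> 0" "y = 0 \<or> v y > v x"
  shows "x + y \<noteq> 0 \<and> v (x + y) = v x"
proof (cases "y = 0")
  case True then show ?thesis using assms by simp
next
  case False
  then have lt: "v y > v x" using assms by simp
  have ne: "x + y \<noteq> 0" using dv_zero_sum[OF assms(1,2)] lt by force
  have "v (x + y) \<ge> min (v x) (v y)" using dv_add[OF assms(1,2) False ne] .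
  then have ge: "v (x + y) \<ge> v x" using lt by simp
  have "v ((x + y) + (- y)) \<ge> min (v (x + y)) (v (-y))"
    using dv_add[OF assms(1) ne, of "-y"] False assms(2) by simp
  then have "v x \<ge> min (v (x + y)) (v y)" using dv_uminus[OF assms(1) False] by simp
  then have "v (x + y) \<le> v x" using lt by linarith
  then show ?thesis using ne ge by simp
qed

lemma dv_dom_add: assumes "discrete_valuation v" "y1 = 0 \<or> v y1 > v x" "y2 = 0 \<or> v y2 > v (x::'a::field)"
  shows "y1 + y2 = 0 \<or> v (y1 + y2) > v x"
proof (cases "y1 = 0 \<or> y2 = 0 \<or> y1 + y2 = 0")
  case True then show ?thesis using assms by auto
next
  case False
  then have "v (y1 + y2) \<ge> min (v y1) (v y2)" using dv_add[OF assms(1)] by blast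
  then show ?thesis using assms False by linarith
qed

lemma dv_neq: assumes "discrete_valuation v" "(x::'a::field) \<noteq> 0" "y \<noteq> 0" "v x \<noteq> v y"
  shows "x + y \<noteq> 0"
  using dv_zero_sum[OF assms(1,2)] assms by force

lemma dv_infinite: assumes "discrete_valuation (v::'a::field \<Rightarrow> int)" shows "infinite (UNIV::'a set)"
proof
  assume "finite (UNIV::'a set)"
  then have "finite (range v)" by simp
  moreover have "range v = (UNIV::int set)" using dv_ex[OF assms] by (metis UNIV_eq_I range_eqI)
  ultimately show False by simp
qed


section \<open>Rootless cubics\<close>

lemma char3: assumes "CHAR('a::field) = 3" shows "(3::'a) = 0"
  using of_nat_CHAR[where 'a='a] assms by simp

lemma cube_sub1: assumes "(3::'a::field) = 0" shows "(z - 1) ^ 3 = z ^ 3 - (1::'a)"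
proof -
  have "(z - 1) ^ 3 = z ^ 3 - 1 - 3 * z^2 + 3 * z" by (simp add: power3_eq_cube power2_eq_square algebra_simps)
  then show ?thesis using assms by simp
qed

lemma lemZ: fixes v :: "'a::field \<Rightarrow> int"
  assumes dv: "discrete_valuation v" and pi: "p \<noteq> 0" "v p = 1" and c3: "(3::'a::field) = 0"
  shows "z ^ 3 + p * z - 1 \<noteq> (0::'a)"
proof (cases "z = 0")
  case True then show ?thesis by simp
next
  case z: False
  have vz3: "v (z ^ 3) = 3 * v z" using dv_power[OF dv z] by simp
  have vpz: "v (p * z) = 1 + v z" using dv_mult[OF dv pi(1) z] pi by simp
  have pz: "p * z \<noteq> 0" using z pi by simp
  have vm1: "v (-1::'a) = 0" using dv_m1[OF dv] .
  consider "v z < 0" | "v z > 0" | "v z = 0" by linarith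
  then show ?thesis
  proof cases
    case 1
    have "p * z + (-1) = 0 \<or> v (p * z + (-1)) > v (z ^ 3)"
      using dv_dom_add[OF dv, of "p*z" "z^3" "-1"] vz3 vpz vm1 1 by simp
    then have "z ^ 3 + (p * z + (-1)) \<noteq> 0" using dv_dom[OF dv, of "z^3"] z by simp
    then show ?thesis by (simp add: algebra_simps)
  next
    case 2
    have "z ^ 3 + p * z = 0 \<or> v (z ^ 3 + p * z) > v (-1::'a)"
      using dv_dom_add[OF dv, of "z^3" "-1" "p*z"] vz3 vpz vm1 2 by simp
    then have "(-1) + (z ^ 3 + p * z) \<noteq> 0" using dv_dom[OF dv, of "-1::'a"] by simp
    then show ?thesis by (simp add: algebra_simps)
  next
    case 3
    have "z ^ 3 + p * z - 1 = (z ^ 3 - 1) + p * z" by (simp add: algebra_simps)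
    also have "\<dots> = (z - 1) ^ 3 + p * z" using cube_sub1[OF c3, of z] by simp
    finally have eq: "z ^ 3 + p * z - 1 = (z - 1) ^ 3 + p * z" .
    show ?thesis
    proof (cases "z = 1")
      case True then show ?thesis using pi by simp
    next
      case False
      then have ne: "(z - 1) ^ 3 \<noteq> 0" by simp
      have "v ((z - 1) ^ 3) = 3 * v (z - 1)" using dv_power[OF dv, of "z - 1" 3] False by simp
      then have "v ((z - 1) ^ 3) \<noteq> v (p * z)" using vpz 3 by presburger
      then have "(z - 1) ^ 3 + p * z \<noteq> 0" using dv_neq[OF dv ne pz] by simp
      then show ?thesis using eq by metis
    qed
  qed
qed

lemma lemL4: fixes v :: "'a::field \<Rightarrow> int"
  assumes dv: "discrete_valuation v" and c3: "(3::'a::field) = 0"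
  and a3: "a3 \<noteq> 0" and a0: "a0 \<noteq> 0"
  shows "\<exists>b. \<forall>r. a3 * r ^ 3 + b * r + a0 \<noteq> (0::'a)"
proof (cases "\<exists>s. - (a0 / a3) = s ^ 3")
  case True
  then obtain s where s: "- (a0 / a3) = s ^ 3" by blast
  have s0: "s \<noteq> 0" using s a0 a3 by auto
  have "a0 / a3 = - (s ^ 3)" using s by (metis minus_minus)
  then have "a0 = - (s ^ 3) * a3" using a3 by (simp add: divide_eq_eq)
  then have a0s: "a0 = - (a3 * s ^ 3)" by simp
  obtain p :: 'a where p: "p \<noteq> 0" "v p = 1" using dv_ex[OF dv] by blast
  show ?thesis
  proof (intro exI allI)
    fix r
    have "a3 * r ^ 3 + (a3 * p * s ^ 2) * r + a0 = a3 * s ^ 3 * ((r / s) ^ 3 + p * (r / s) - 1)"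
      using s0 unfolding a0s by (simp add: field_simps power3_eq_cube power2_eq_square)
    moreover have "(r / s) ^ 3 + p * (r / s) - 1 \<noteq> 0" using lemZ[OF dv p c3] .
    ultimately show "a3 * r ^ 3 + (a3 * p * s ^ 2) * r + a0 \<noteq> 0" using a3 s0 by simp
  qed
next
  case False
  show ?thesis
  proof (intro exI allI)
    fix r
    show "a3 * r ^ 3 + 0 * r + a0 \<noteq> 0"
    proof
      assume "a3 * r ^ 3 + 0 * r + a0 = 0"
      then have "a3 * r ^ 3 = - a0" by (simp add: eq_neg_iff_add_eq_0)
      then have "r ^ 3 = - a0 / a3" using a3 by (metis nonzero_mult_div_cancel_left)
      then have "- (a0 / a3) = r ^ 3" by simp
      then show False using False by blast
    qed
  qed
qed

lemma lemL4': fixes v :: "'a::field \<Rightarrow> int"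
  assumes dv: "discrete_valuation v" and c3: "(3::'a::field) = 0"
  and a3: "a3 \<noteq> 0" and a0: "a0 \<noteq> 0"
  shows "\<exists>b. \<forall>r. a3 * r ^ 3 + b * r ^ 2 + a0 \<noteq> (0::'a)"
proof -
  obtain b where b: "\<And>y. a0 * y ^ 3 + b * y + a3 \<noteq> 0" using lemL4[OF dv c3 a0 a3] by blast
  show ?thesis
  proof (intro exI allI notI)
    fix r assume h: "a3 * r ^ 3 + b * r ^ 2 + a0 = 0"
    have r0: "r \<noteq> 0" using h a0 by auto
    have "a0 * (1/r) ^ 3 + b * (1/r) + a3 = (a3 * r ^ 3 + b * r ^ 2 + a0) / r ^ 3"
      using r0 by (simp add: field_simps power3_eq_cube power2_eq_square)
    then show False using h b[of "1/r"] by simp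
  qed
qed

lemma lemL1: fixes v :: "'a::field \<Rightarrow> int"
  assumes dv: "discrete_valuation v" and a3: "a3 \<noteq> 0"
  shows "\<exists>a0. a0 \<noteq> 0 \<and> (\<forall>r. a0 + a1 * r + a2 * r ^ 2 + a3 * r ^ 3 \<noteq> (0::'a::field))"
proof -
  define K where "K = \<bar>v a1 - v a3\<bar> + \<bar>v a2 - v a3\<bar>"
  define n where "n = - 3 * K - 2"
  obtain e :: 'a where e: "e \<noteq> 0" "v e = n" using dv_ex[OF dv] by blast
  have va0: "v (a3 * e) = v a3 + n" using dv_mult[OF dv a3 e(1)] e by simp
  have a0: "a3 * e \<noteq> 0" using a3 e by simp
  show ?thesis
  proof (intro exI conjI allI)
    show "a3 * e \<noteq> 0" using a0 .
    fix r
    show "a3 * e + a1 * r + a2 * r ^ 2 + a3 * r ^ 3 \<noteq> 0"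
    proof (cases "r = 0")
      case True then show ?thesis using a0 by simp
    next
      case r: False
      define w where "w = v r"
      have v3: "v (a3 * r ^ 3) = v a3 + 3 * w"
        using dv_mult[OF dv a3, of "r^3"] dv_power[OF dv r, of 3] r unfolding w_def by simp
      have t3: "a3 * r ^ 3 \<noteq> 0" using a3 r by simp
      have v2: "a2 * r ^ 2 = 0 \<or> v (a2 * r ^ 2) = v a2 + 2 * w"
        using dv_mult[OF dv, of a2 "r^2"] dv_power[OF dv r, of 2] r unfolding w_def by auto
      have v1: "a1 * r = 0 \<or> v (a1 * r) = v a1 + w"
        using dv_mult[OF dv, of a1 r] r unfolding w_def by auto
      have Kb: "\<bar>v a1 - v a3\<bar> \<le> K" "\<bar>v a2 - v a3\<bar> \<le> K" unfolding K_def by auto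
      have "3 * w \<noteq> n" unfolding n_def by presburger
      then consider "3 * w < n" | "3 * w > n" by linarith
      then show ?thesis
      proof cases
        case 1
        then have wb: "w \<le> - K - 1" unfolding n_def by presburger
        have d1: "a1 * r = 0 \<or> v (a1 * r) > v (a3 * r ^ 3)" using v1 v3 wb Kb by auto
        have d2: "a2 * r ^ 2 = 0 \<or> v (a2 * r ^ 2) > v (a3 * r ^ 3)" using v2 v3 wb Kb by auto
        have d0: "a3 * e = 0 \<or> v (a3 * e) > v (a3 * r ^ 3)" using va0 v3 1 by auto
        have "a3 * e + a1 * r = 0 \<or> v (a3 * e + a1 * r) > v (a3 * r ^ 3)"
          using dv_dom_add[OF dv d0 d1] .
        then have "a3 * e + a1 * r + a2 * r ^ 2 = 0 \<or> v (a3 * e + a1 * r + a2 * r ^ 2) > v (a3 * r ^ 3)"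
          using dv_dom_add[OF dv _ d2] by blast
        then have "a3 * r ^ 3 + (a3 * e + a1 * r + a2 * r ^ 2) \<noteq> 0" using dv_dom[OF dv t3] by blast
        then show ?thesis by (simp add: algebra_simps)
      next
        case 2
        then have wb: "w \<ge> - K" unfolding n_def by presburger
        have d1: "a1 * r = 0 \<or> v (a1 * r) > v (a3 * e)" using v1 va0 wb Kb n_def by auto
        have d2: "a2 * r ^ 2 = 0 \<or> v (a2 * r ^ 2) > v (a3 * e)" using v2 va0 wb Kb n_def by auto
        have d3: "a3 * r ^ 3 = 0 \<or> v (a3 * r ^ 3) > v (a3 * e)" using va0 v3 2 by auto
        have "a1 * r + a2 * r ^ 2 = 0 \<or> v (a1 * r + a2 * r ^ 2) > v (a3 * e)"
          using dv_dom_add[OF dv d1 d2] .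
        then have "a1 * r + a2 * r ^ 2 + a3 * r ^ 3 = 0 \<or> v (a1 * r + a2 * r ^ 2 + a3 * r ^ 3) > v (a3 * e)"
          using dv_dom_add[OF dv _ d3] by blast
        then have "a3 * e + (a1 * r + a2 * r ^ 2 + a3 * r ^ 3) \<noteq> 0" using dv_dom[OF dv a0] by blast
        then show ?thesis by (simp add: algebra_simps)
      qed
    qed
  qed
qed

lemma lemL2: fixes v :: "'a::field \<Rightarrow> int"
  assumes dv: "discrete_valuation v" and a0: "a0 \<noteq> 0"
  shows "\<exists>a3. a3 \<noteq> 0 \<and> (\<forall>r. a0 + a1 * r + a2 * r ^ 2 + a3 * r ^ 3 \<noteq> (0::'a::field))"
proof -
  obtain e where e: "e \<noteq> 0" "\<And>y. e + a2 * y + a1 * y ^ 2 + a0 * y ^ 3 \<noteq> 0"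
    using lemL1[OF dv a0, of a2 a1] by blast
  show ?thesis
  proof (intro exI conjI allI)
    show "e \<noteq> 0" using e(1) .
    fix r show "a0 + a1 * r + a2 * r ^ 2 + e * r ^ 3 \<noteq> 0"
    proof
    assume h: "a0 + a1 * r + a2 * r ^ 2 + e * r ^ 3 = 0"
    have r0: "r \<noteq> 0" using h a0 by auto
    have "e + a2 * (1/r) + a1 * (1/r) ^ 2 + a0 * (1/r) ^ 3 = (a0 + a1 * r + a2 * r ^ 2 + e * r ^ 3) / r ^ 3"
      using r0 by (simp add: field_simps power3_eq_cube power2_eq_square)
    then show False using h e(2)[of "1/r"] by simp
    qed
  qed
qed


section \<open>The game\<close>

lemma poly_fp3: "poly (final_poly 3 c) x = the (c 0) + the (c 1) * x + the (c 2) * x ^ 2 + the (c 3) * x ^ 3"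
  unfolding final_poly_def poly_sum poly_monom by (simp add: numeral_3_eq_3 numeral_2_eq_2 atMost_Suc algebra_simps power2_eq_square)

definition validp :: "(nat \<Rightarrow> 'a::field option) \<Rightarrow> nat \<Rightarrow> bool" where
  "validp c n \<longleftrightarrow> card {i. i \<le> 3 \<and> c i = None} = n \<and> c 0 \<noteq> Some 0 \<and> c 3 \<noteq> Some 0"

lemma fin_free: "finite {i::nat. i \<le> 3 \<and> P i}" by simp

lemma valid_step: assumes "validp c (Suc n)" "legal_move 3 c i x" shows "validp (c(i := Some x)) n"
proof -
  have eq: "{j. j \<le> 3 \<and> (c(i := Some x)) j = None} = {j. j \<le> 3 \<and> c j = None} - {i}" by auto
  have "i \<in> {j. j \<le> 3 \<and> c j = None}" using assms(2) unfolding legal_move_def by auto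
  then have "card ({j. j \<le> 3 \<and> c j = None} - {i}) = n"
    using assms(1) fin_free unfolding validp_def by (simp add: card_Diff_singleton)
  then show ?thesis using assms eq unfolding validp_def legal_move_def by auto
qed

lemma valid_ex: assumes "validp c (Suc n)" shows "\<exists>i x. legal_move 3 c i (x::'a::field)"
proof -
  have "{j. j \<le> 3 \<and> c j = None} \<noteq> {}" using assms unfolding validp_def by (metis card.empty nat.distinct(1))
  then obtain i where "i \<le> 3" "c i = None" by blast
  then have "legal_move 3 c i (1::'a)" unfolding legal_move_def by simp
  then show ?thesis by blast
qed

lemma nonroot_ex: assumes "infinite (UNIV::'a::field set)" "p \<noteq> 0" shows "\<exists>r::'a. r \<noteq> 0 \<and> poly p r \<noteq> 0"
proof -
  have "finite (insert 0 {x. poly p x = 0})" using poly_roots_finite[OF assms(2)] by simp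
  then obtain r where "r \<notin> insert 0 {x. poly p x = 0}" using ex_new_if_finite[OF assms(1)] by blast
  then show ?thesis by auto
qed

lemma wanda_last: fixes v :: "'a::field \<Rightarrow> int"
  assumes dv: "discrete_valuation v" and val: "validp (c :: nat \<Rightarrow> 'a option) (Suc 0)"
  shows "win 3 (wanda_goal 3) (Suc 0) c Wanda Wanda"
proof -
  have inf: "infinite (UNIV::'a set)" using dv_infinite[OF dv] .
  have "card {i. i \<le> 3 \<and> c i = None} = 1" using val unfolding validp_def by simp
  then obtain j where j: "{i. i \<le> 3 \<and> c i = None} = {j}" by (rule card_1_singletonE)
  then have jl: "j \<le> 3" "c j = None" by auto
  have oth: "\<And>i. i \<le> 3 \<Longrightarrow> i \<noteq> j \<Longrightarrow> c i \<noteq> None" using j by auto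
  have c0: "c 0 \<noteq> Some 0" "c 3 \<noteq> Some 0" using val unfolding validp_def by auto
  have goal: "\<exists>i x. legal_move 3 c i x \<and> (\<exists>r. poly (final_poly 3 (c(i := Some x))) r = 0)"
  proof -
    consider "j = 0" | "j = 1" | "j = 2" | "j = 3" using jl by linarith
    then show ?thesis
    proof cases
      case 1
      have a3: "the (c 3) \<noteq> 0" using oth[of 3] c0 1 by (cases "c 3") auto
      have "[:the (c 1), the (c 2), the (c 3):] \<noteq> 0" using a3 by simp
      then obtain r where r: "r \<noteq> 0" "poly [:the (c 1), the (c 2), the (c 3):] r \<noteq> 0"
        using nonroot_ex[OF inf] by blast
      define y where "y = - (the (c 1) * r + the (c 2) * r ^ 2 + the (c 3) * r ^ 3)"
      have "y = - (r * poly [:the (c 1), the (c 2), the (c 3):] r)"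
        unfolding y_def by (simp add: algebra_simps power2_eq_square power3_eq_cube)
      then have "y \<noteq> 0" using r by simp
      then have "legal_move 3 c 0 y" using jl 1 unfolding legal_move_def by simp
      moreover have "poly (final_poly 3 (c(0 := Some y))) r = 0" unfolding poly_fp3 y_def by simp
      ultimately show ?thesis by blast
    next
      case 2
      define y where "y = - (the (c 0) + the (c 2) + the (c 3))"
      have "legal_move 3 c 1 y" using jl 2 unfolding legal_move_def by simp
      moreover have "poly (final_poly 3 (c(1 := Some y))) 1 = 0" unfolding poly_fp3 y_def by simp
      ultimately show ?thesis by blast
    next
      case 3
      define y where "y = - (the (c 0) + the (c 1) + the (c 3))"
      have "legal_move 3 c 2 y" using jl 3 unfolding legal_move_def by simp
      moreover have "poly (final_poly 3 (c(2 := Some y))) 1 = 0" unfolding poly_fp3 y_def by simp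
      ultimately show ?thesis by blast
    next
      case 4
      have a0: "the (c 0) \<noteq> 0" using oth[of 0] c0 4 by (cases "c 0") auto
      have "[:the (c 0), the (c 1), the (c 2):] \<noteq> 0" using a0 by simp
      then obtain r where r: "r \<noteq> 0" "poly [:the (c 0), the (c 1), the (c 2):] r \<noteq> 0"
        using nonroot_ex[OF inf] by blast
      have pe: "poly [:the (c 0), the (c 1), the (c 2):] r = the (c 0) + the (c 1) * r + the (c 2) * r ^ 2"
        by (simp add: algebra_simps power2_eq_square)
      define y where "y = - (the (c 0) + the (c 1) * r + the (c 2) * r ^ 2) / r ^ 3"
      have E: "the (c 0) + the (c 1) * r + the (c 2) * r ^ 2 \<noteq> 0" using r pe by (simp add: add.assoc)
      have "y \<noteq> 0" unfolding y_def using E r(1) by (metis divide_eq_0_iff neg_equal_0_iff_equal power_not_zero)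
      then have "legal_move 3 c 3 y" using jl 4 unfolding legal_move_def by simp
      moreover have "poly (final_poly 3 (c(3 := Some y))) r = 0" unfolding poly_fp3 y_def using r(1) by simp
      ultimately show ?thesis by blast
    qed
  qed
  then show ?thesis unfolding wanda_goal_def has_root_in_field_def by simp
qed

lemma wanda_W2: fixes v :: "'a::field \<Rightarrow> int"
  assumes dv: "discrete_valuation v" and val: "validp (c :: nat \<Rightarrow> 'a option) (Suc (Suc 0))"
  shows "win 3 (wanda_goal 3) (Suc (Suc 0)) c Nora Wanda"
  using wanda_last[OF dv valid_step[OF val]] by simp

lemma wanda_W3: fixes v :: "'a::field \<Rightarrow> int"
  assumes dv: "discrete_valuation v" and val: "validp (c :: nat \<Rightarrow> 'a option) (Suc (Suc (Suc 0)))"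
  shows "win 3 (wanda_goal 3) (Suc (Suc (Suc 0))) c Wanda Wanda"
proof -
  obtain i x where l: "legal_move 3 c i (x::'a)" using valid_ex[OF val] by blast
  show ?thesis using wanda_W2[OF dv valid_step[OF val l]] l by auto
qed

lemma wanda_W4: fixes v :: "'a::field \<Rightarrow> int"
  assumes dv: "discrete_valuation v" and val: "validp (c :: nat \<Rightarrow> 'a option) (Suc (Suc (Suc (Suc 0))))"
  shows "win 3 (wanda_goal 3) (Suc (Suc (Suc (Suc 0)))) c Nora Wanda"
  using wanda_W3[OF dv valid_step[OF val]] by simp

lemma valid_init: "validp (\<lambda>_. None :: 'a::field option) 4"
  unfolding validp_def by (simp add: numeral_3_eq_3 atMost_Suc atMost_def[symmetric])


lemma nora_fin: assumes "legal_move 3 c k z" and "\<forall>r. poly (final_poly 3 (c(k := Some z))) r \<noteq> 0"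
  shows "win 3 (nora_goal 3) (Suc 0) c Nora Nora"
  using assms by (auto simp: nora_goal_def has_root_in_field_def)

lemma nora_mid: assumes "legal_move 3 c k z"
  and "\<And>j y. legal_move 3 (c(k := Some z)) j y \<Longrightarrow> win 3 (nora_goal 3) (Suc 0) ((c(k := Some z))(j := Some y)) Nora Nora"
  shows "win 3 (nora_goal 3) (Suc (Suc (Suc 0))) c Nora Nora"
  using assms by auto

lemma jcases: "(j::nat) \<le> 3 \<Longrightarrow> j = 0 \<or> j = 1 \<or> j = 2 \<or> j = 3" by linarith

lemma nora_after_first: fixes v :: "'a::field \<Rightarrow> int"
  assumes dv: "discrete_valuation v" and c3: "(3::'a) = 0"
  and l: "legal_move 3 (\<lambda>_. None) i (x::'a)"
  shows "win 3 (nora_goal 3) (Suc (Suc (Suc 0))) ((\<lambda>_. None)(i := Some x)) Nora Nora"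
proof -
  have i3: "i \<le> 3" using l unfolding legal_move_def by simp
  consider "i = 0" | "i = 1" | "i = 2" | "i = 3" using i3 by linarith
  then show ?thesis
  proof cases
    case 1
    then have x: "x \<noteq> 0" using l unfolding legal_move_def by simp
    show ?thesis
    proof (rule nora_mid[where k=2 and z=0])
      show "legal_move 3 ((\<lambda>_. None)(i := Some x)) 2 0" using 1 unfolding legal_move_def by simp
      fix j y assume lj: "legal_move 3 (((\<lambda>_. None)(i := Some x))(2 := Some 0)) j (y::'a)"
      then have "j = 1 \<or> (j = 3 \<and> y \<noteq> 0)" using 1 jcases[of j] unfolding legal_move_def by fastforce
      then show "win 3 (nora_goal 3) (Suc 0) ((((\<lambda>_. None)(i := Some x))(2 := Some 0))(j := Some y)) Nora Nora"
      proof
        assume j: "j = 1"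
        obtain a3 where h: "a3 \<noteq> 0" "\<forall>r. x + y * r + 0 * r ^ 2 + a3 * r ^ 3 \<noteq> 0" using lemL2[OF dv x, of y 0] by blast
        show ?thesis
          by (rule nora_fin[where k=3 and z=a3]) (use 1 j h in \<open>auto simp: legal_move_def poly_fp3\<close>)
      next
        assume j: "j = 3 \<and> y \<noteq> 0"
        obtain b where h: "\<forall>r. y * r ^ 3 + b * r + x \<noteq> 0" using lemL4[OF dv c3 _ x, of y] j by blast
        show ?thesis
          by (rule nora_fin[where k=1 and z=b]) (use 1 j h in \<open>auto simp: legal_move_def poly_fp3 algebra_simps\<close>)
      qed
    qed
  next
    case 2
    show ?thesis
    proof (rule nora_mid[where k=2 and z=0])
      show "legal_move 3 ((\<lambda>_. None)(i := Some x)) 2 0" using 2 unfolding legal_move_def by simp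
      fix j y assume lj: "legal_move 3 (((\<lambda>_. None)(i := Some x))(2 := Some 0)) j (y::'a)"
      then have "(j = 0 \<or> j = 3) \<and> y \<noteq> 0" using 2 jcases[of j] unfolding legal_move_def by fastforce
      then have y: "y \<noteq> 0" and jj: "j = 0 \<or> j = 3" by auto
      from jj show "win 3 (nora_goal 3) (Suc 0) ((((\<lambda>_. None)(i := Some x))(2 := Some 0))(j := Some y)) Nora Nora"
      proof
        assume j: "j = 0"
        obtain a3 where h: "a3 \<noteq> 0" "\<forall>r. y + x * r + 0 * r ^ 2 + a3 * r ^ 3 \<noteq> 0" using lemL2[OF dv y, of x 0] by blast
        show ?thesis
          by (rule nora_fin[where k=3 and z=a3]) (use 2 j h in \<open>auto simp: legal_move_def poly_fp3\<close>)
      next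
        assume j: "j = 3"
        obtain a0 where h: "a0 \<noteq> 0" "\<forall>r. a0 + x * r + 0 * r ^ 2 + y * r ^ 3 \<noteq> 0" using lemL1[OF dv y, of x 0] by blast
        show ?thesis
          by (rule nora_fin[where k=0 and z=a0]) (use 2 j h in \<open>auto simp: legal_move_def poly_fp3\<close>)
      qed
    qed
  next
    case 3
    show ?thesis
    proof (rule nora_mid[where k=1 and z=0])
      show "legal_move 3 ((\<lambda>_. None)(i := Some x)) 1 0" using 3 unfolding legal_move_def by simp
      fix j y assume lj: "legal_move 3 (((\<lambda>_. None)(i := Some x))(1 := Some 0)) j (y::'a)"
      then have "(j = 0 \<or> j = 3) \<and> y \<noteq> 0" using 3 jcases[of j] unfolding legal_move_def by fastforce
      then have y: "y \<noteq> 0" and jj: "j = 0 \<or> j = 3" by auto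
      from jj show "win 3 (nora_goal 3) (Suc 0) ((((\<lambda>_. None)(i := Some x))(1 := Some 0))(j := Some y)) Nora Nora"
      proof
        assume j: "j = 0"
        obtain a3 where h: "a3 \<noteq> 0" "\<forall>r. y + 0 * r + x * r ^ 2 + a3 * r ^ 3 \<noteq> 0" using lemL2[OF dv y, of 0 x] by blast
        show ?thesis
          by (rule nora_fin[where k=3 and z=a3]) (use 3 j h in \<open>auto simp: legal_move_def poly_fp3\<close>)
      next
        assume j: "j = 3"
        obtain a0 where h: "a0 \<noteq> 0" "\<forall>r. a0 + 0 * r + x * r ^ 2 + y * r ^ 3 \<noteq> 0" using lemL1[OF dv y, of 0 x] by blast
        show ?thesis
          by (rule nora_fin[where k=0 and z=a0]) (use 3 j h in \<open>auto simp: legal_move_def poly_fp3\<close>)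
      qed
    qed
  next
    case 4
    then have x: "x \<noteq> 0" using l unfolding legal_move_def by simp
    show ?thesis
    proof (rule nora_mid[where k=1 and z=0])
      show "legal_move 3 ((\<lambda>_. None)(i := Some x)) 1 0" using 4 unfolding legal_move_def by simp
      fix j y assume lj: "legal_move 3 (((\<lambda>_. None)(i := Some x))(1 := Some 0)) j (y::'a)"
      then have "j = 2 \<or> (j = 0 \<and> y \<noteq> 0)" using 4 jcases[of j] unfolding legal_move_def by fastforce
      then show "win 3 (nora_goal 3) (Suc 0) ((((\<lambda>_. None)(i := Some x))(1 := Some 0))(j := Some y)) Nora Nora"
      proof
        assume j: "j = 2"
        obtain a0 where h: "a0 \<noteq> 0" "\<forall>r. a0 + 0 * r + y * r ^ 2 + x * r ^ 3 \<noteq> 0" using lemL1[OF dv x, of 0 y] by blast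
        show ?thesis
          by (rule nora_fin[where k=0 and z=a0]) (use 4 j h in \<open>auto simp: legal_move_def poly_fp3\<close>)
      next
        assume j: "j = 0 \<and> y \<noteq> 0"
        obtain b where h: "\<forall>r. x * r ^ 3 + b * r ^ 2 + y \<noteq> 0" using lemL4'[OF dv c3 x, of y] j by blast
        show ?thesis
          by (rule nora_fin[where k=2 and z=b]) (use 4 j h in \<open>auto simp: legal_move_def poly_fp3 algebra_simps\<close>)
      qed
    qed
  qed
qed

theorem lemma14:
  fixes v :: "'a::field \<Rightarrow> int" and first :: player
  assumes "complete_dvr_fraction_field v"
    and "CHAR('a) = 3"
  shows "has_winning_strategy TYPE('a) 3 first (last_mover 3 first)"
proof -
  have dv: "discrete_valuation v" using assms(1) unfolding complete_dvr_fraction_field_def by simp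
  have c3: "(3::'a) = 0" using char3[OF assms(2)] .
  have four: "(3::nat) + 1 = Suc (Suc (Suc (Suc 0)))" by simp
  show ?thesis
  proof (cases first)
    case Nora
    have "win 3 (wanda_goal 3) (Suc (Suc (Suc (Suc 0)))) (\<lambda>_. None :: 'a option) Nora Wanda"
      using wanda_W4[OF dv] valid_init[where 'a='a] by (simp add: numeral_eq_Suc)
    then show ?thesis using Nora unfolding has_winning_strategy_def last_mover_def four by simp
  next
    case Wanda
    have "win 3 (nora_goal 3) (Suc (Suc (Suc (Suc 0)))) (\<lambda>_. None :: 'a option) Wanda Nora"
      using nora_after_first[OF dv c3] by simp
    then show ?thesis using Wanda unfolding has_winning_strategy_def last_mover_def four by simp
  qed
qed

end
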